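(* Let $(X,S)$ be an association scheme, fix $x\in X$, and let $K$ be a field of positive characteristic $p$. Suppose that $p$ divides the valency $n_s$ for some $s\in S$. Then the Terwilliger algebra $KT(x)$ is not semisimple.
   Context: An association scheme $(X,S)$ consists of a finite set $X$ and a partition $S$ of $X\times X$ such that: (1) $1:=\{(x,x)\mid x\in X\}\in S$; (2) for $s\in S$, $s^*:=\{(y,x)\mid (x,y)\in s\}\in S$; (3) for $s,t,u\in S$ there is a nonnegative integer $p_{st}^u$ with $p_{st}^u=|xs\cap ty|$ whenever $(x,y)\in u$, where $xs=\{y\mid (x,y)\in s\}$ and $ty=\{z\mid (z,y)\in t\}$. The valency of $s\in S$ is $n_s:=p_{ss^*}^1=|xs|$ (independent of $x$). For $s\subseteq X\times X$ the adjacency matrix $\sigma_s$ has $(y,z)$-entry $1$ if $(y,z)\in s$ and $0$ otherwise. Fixing $x\in X$, for $s\in S$ let $E_s^*$ be the diagonal $0/1$ matrix whose $(y,y)$-entry is $1$ iff $y\in xs$. For a field $K$, $KT(x)$ is the $K$-subalgebra of $\mathrm{M}_X(K)$ generated by $\{E_s^*\sigma_tE_u^*\mid s,t,u\in S\}$ (matrices regarded over $K$). *)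

theory Defs
  imports Main
begin

text \<open>Matrices indexed by X over K are represented as functions 'a => 'a => 'k
  (entries outside X x X are irrelevant / zero for all matrices considered).\<close>

definition assoc_scheme :: "'a set \<Rightarrow> ('a \<times> 'a) set set \<Rightarrow> bool" where
  "assoc_scheme X S \<longleftrightarrow>
     finite X \<and>
     (\<forall>s\<in>S. s \<noteq> {}) \<and> \<Union>S = X \<times> X \<and>
     (\<forall>s\<in>S. \<forall>t\<in>S. s \<noteq> t \<longrightarrow> s \<inter> t = {}) \<and>
     Id_on X \<in> S \<and>
     (\<forall>s\<in>S. converse s \<in> S) \<and>
     (\<forall>s\<in>S. \<forall>t\<in>S. \<forall>u\<in>S. \<exists>c::nat. \<forall>x y. (x, y) \<in> u \<longrightarrow>
        card {z. (x, z) \<in> s \<and> (z, y) \<in> t} = c)"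

definition int_number :: "('a \<times> 'a) set \<Rightarrow> ('a \<times> 'a) set \<Rightarrow> ('a \<times> 'a) set \<Rightarrow> nat" where
  "int_number s t u = (let (x, y) = (SOME p. p \<in> u) in card {z. (x, z) \<in> s \<and> (z, y) \<in> t})"

definition valency :: "'a set \<Rightarrow> ('a \<times> 'a) set \<Rightarrow> nat" where
  "valency X s = int_number s (converse s) (Id_on X)"

definition mmult :: "'a set \<Rightarrow> ('a \<Rightarrow> 'a \<Rightarrow> 'k::field) \<Rightarrow> ('a \<Rightarrow> 'a \<Rightarrow> 'k) \<Rightarrow> ('a \<Rightarrow> 'a \<Rightarrow> 'k)" where
  "mmult X A B = (\<lambda>y z. \<Sum>w\<in>X. A y w * B w z)"

definition mone :: "'a set \<Rightarrow> ('a \<Rightarrow> 'a \<Rightarrow> 'k::field)" where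
  "mone X = (\<lambda>y z. if y = z \<and> y \<in> X then 1 else 0)"

definition adj_mat :: "('a \<times> 'a) set \<Rightarrow> ('a \<Rightarrow> 'a \<Rightarrow> 'k::field)" where
  "adj_mat s = (\<lambda>y z. if (y, z) \<in> s then 1 else 0)"

definition dual_idem :: "'a \<Rightarrow> ('a \<times> 'a) set \<Rightarrow> ('a \<Rightarrow> 'a \<Rightarrow> 'k::field)" where
  "dual_idem x s = (\<lambda>y z. if y = z \<and> (x, y) \<in> s then 1 else 0)"

inductive_set terwilliger :: "'a set \<Rightarrow> ('a \<times> 'a) set set \<Rightarrow> 'a \<Rightarrow> ('a \<Rightarrow> 'a \<Rightarrow> 'k::field) set"
  for X S x where
  gen: "s \<in> S \<Longrightarrow> t \<in> S \<Longrightarrow> u \<in> S \<Longrightarrow>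
          mmult X (mmult X (dual_idem x s) (adj_mat t)) (dual_idem x u) \<in> terwilliger X S x"
| one: "mone X \<in> terwilliger X S x"
| add: "A \<in> terwilliger X S x \<Longrightarrow> B \<in> terwilliger X S x \<Longrightarrow> (\<lambda>y z. A y z + B y z) \<in> terwilliger X S x"
| smult: "A \<in> terwilliger X S x \<Longrightarrow> (\<lambda>y z. c * A y z) \<in> terwilliger X S x"
| mult: "A \<in> terwilliger X S x \<Longrightarrow> B \<in> terwilliger X S x \<Longrightarrow> mmult X A B \<in> terwilliger X S x"

definition mat_ideal :: "'a set \<Rightarrow> ('a \<Rightarrow> 'a \<Rightarrow> 'k::field) set \<Rightarrow> ('a \<Rightarrow> 'a \<Rightarrow> 'k) set \<Rightarrow> bool" where
  "mat_ideal X A I \<longleftrightarrow> I \<subseteq> A \<and> (\<lambda>y z. 0) \<in> I \<and>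
     (\<forall>a\<in>I. \<forall>b\<in>I. (\<lambda>y z. a y z + b y z) \<in> I) \<and>
     (\<forall>a\<in>I. \<forall>c. (\<lambda>y z. c * a y z) \<in> I) \<and>
     (\<forall>a\<in>A. \<forall>b\<in>I. mmult X a b \<in> I \<and> mmult X b a \<in> I)"

definition mat_nilpotent :: "'a set \<Rightarrow> ('a \<Rightarrow> 'a \<Rightarrow> 'k::field) set \<Rightarrow> bool" where
  "mat_nilpotent X I \<longleftrightarrow> (\<exists>n\<ge>1. \<forall>as. length as = n \<and> set as \<subseteq> I \<longrightarrow>
      (\<forall>y\<in>X. \<forall>z\<in>X. foldr (mmult X) as (mone X) y z = 0))"

text \<open>A finite-dimensional algebra is semisimple iff its (Jacobson) radical, which is the
  largest nilpotent ideal, is zero, i.e. iff it has no nonzero nilpotent two-sided ideal.\<close>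
definition mat_semisimple :: "'a set \<Rightarrow> ('a \<Rightarrow> 'a \<Rightarrow> 'k::field) set \<Rightarrow> bool" where
  "mat_semisimple X A \<longleftrightarrow>
     \<not> (\<exists>I. mat_ideal X A I \<and> mat_nilpotent X I \<and> (\<exists>a\<in>I. \<exists>y\<in>X. \<exists>z\<in>X. a y z \<noteq> 0))"

end

theory Submission imports Defs begin

lemma sum_point: "finite X \<Longrightarrow> (\<And>w. w \<in> X \<Longrightarrow> w \<noteq> a \<Longrightarrow> f w = 0) \<Longrightarrow> (\<Sum>w\<in>X. f w) = (if a \<in> X then f a else 0)"
  by (simp add: sum.remove[of X a f] sum.neutral)
  (metis (mono_tags, lifting) sum.neutral)

lemma mmult_dual_left:
  "finite X \<Longrightarrow> mmult X (dual_idem x s) M y z = (if y \<in> X \<and> (x, y) \<in> s then M y z else 0)"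
  unfolding mmult_def dual_idem_def
  by (subst sum_point[where a=y]) auto

lemma mmult_dual_right:
  "finite X \<Longrightarrow> mmult X M (dual_idem x s) y z = (if z \<in> X \<and> (x, z) \<in> s then M y z else 0)"
  unfolding mmult_def dual_idem_def
  by (subst sum_point[where a=z]) auto

lemma mmult_mone_right:
  "finite X \<Longrightarrow> mmult X M (mone X) y z = (if z \<in> X then M y z else 0)"
  unfolding mmult_def mone_def
  by (subst sum_point[where a=z]) auto


lemma swap1: "(\<Sum>w\<in>X. f w * (\<Sum>t\<in>Y. g w t * h t)) = (\<Sum>t\<in>Y. (\<Sum>w\<in>X. f w * g w t) * (h t :: 'k::field))"
proof -
  have "(\<Sum>w\<in>X. f w * (\<Sum>t\<in>Y. g w t * h t)) = (\<Sum>w\<in>X. \<Sum>t\<in>Y. f w * g w t * h t)"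
    by (simp add: sum_distrib_left mult.assoc)
  also have "\<dots> = (\<Sum>t\<in>Y. \<Sum>w\<in>X. f w * g w t * h t)" by (rule sum.swap)
  also have "\<dots> = (\<Sum>t\<in>Y. (\<Sum>w\<in>X. f w * g w t) * h t)" by (simp add: sum_distrib_right)
  finally show ?thesis .
qed

lemma swap2: "(\<Sum>w\<in>X. (\<Sum>t\<in>Y. g w t * h t) * f w) = (\<Sum>t\<in>Y. (\<Sum>w\<in>X. f w * g w t) * (h t :: 'k::field))"
  using swap1[of f g h Y X] by (simp add: mult.commute)

definition rs :: "'a set \<Rightarrow> 'a \<Rightarrow> ('a \<times> 'a) set \<Rightarrow> ('a \<Rightarrow> 'a \<Rightarrow> 'k::field) \<Rightarrow> 'a \<Rightarrow> 'k" where
  "rs X x u C z = (\<Sum>w\<in>{w\<in>X. (x, w) \<in> u}. C w z)"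

context
  fixes X :: "'a set" and S :: "('a \<times> 'a) set set" and x :: 'a
  assumes AS: "assoc_scheme X S" and xX: "x \<in> X"
begin

lemma ASc: "finite X" "\<forall>s\<in>S. s \<noteq> {}" "\<Union>S = X \<times> X" "\<forall>s\<in>S. \<forall>t\<in>S. s \<noteq> t \<longrightarrow> s \<inter> t = {}"
  "Id_on X \<in> S" "\<forall>s\<in>S. converse s \<in> S"
  using AS unfolding assoc_scheme_def by auto
lemma finX: "finite X" by (rule ASc(1))
lemma Ssub: "s \<in> S \<Longrightarrow> s \<subseteq> X \<times> X" using ASc(3) by (metis Sup_upper)
lemma disj: "s \<in> S \<Longrightarrow> t \<in> S \<Longrightarrow> s \<noteq> t \<Longrightarrow> s \<inter> t = {}" using ASc(4) by simp
lemma disj': "s \<in> S \<Longrightarrow> t \<in> S \<Longrightarrow> p \<in> s \<Longrightarrow> p \<in> t \<Longrightarrow> s = t" using disj by blast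
lemma IdS: "Id_on X \<in> S" by (rule ASc(5))
lemma convS: "s \<in> S \<Longrightarrow> converse s \<in> S" using ASc(6) by simp
lemma nonempty: "s \<in> S \<Longrightarrow> s \<noteq> {}" using ASc(2) by simp
lemma reg: "s \<in> S \<Longrightarrow> t \<in> S \<Longrightarrow> u \<in> S \<Longrightarrow> (a, b) \<in> u \<Longrightarrow> (a', b') \<in> u \<Longrightarrow>
   card {z. (a, z) \<in> s \<and> (z, b) \<in> t} = card {z. (a', z) \<in> s \<and> (z, b') \<in> t}"
proof -
  assume "s \<in> S" "t \<in> S" "u \<in> S" "(a, b) \<in> u" "(a', b') \<in> u"
  then obtain c :: nat where "\<forall>x y. (x, y) \<in> u \<longrightarrow> card {z. (x, z) \<in> s \<and> (z, y) \<in> t} = c"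
    using AS unfolding assoc_scheme_def by meson
  then show ?thesis using \<open>(a, b) \<in> u\<close> \<open>(a', b') \<in> u\<close> by simp
qed
lemma cover: "y \<in> X \<Longrightarrow> z \<in> X \<Longrightarrow> \<exists>u\<in>S. (y, z) \<in> u"
proof -
  assume "y \<in> X" "z \<in> X"
  then have "(y, z) \<in> \<Union>S" using ASc(3) by simp
  then show ?thesis by blast
qed
lemma finS: "finite S"
proof -
  have "S \<subseteq> Pow (X \<times> X)" using Ssub by blast
  then show ?thesis using finX finite_subset by blast
qed

lemma partition_sum:
  "(\<Sum>t\<in>X. h t) = (\<Sum>c\<in>S. \<Sum>t\<in>{t\<in>X. (x, t) \<in> c}. h t)"
proof -
  have "X = (\<Union>c\<in>S. {t\<in>X. (x, t) \<in> c})" using cover xX by blast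
  then have "(\<Sum>t\<in>X. h t) = (\<Sum>t\<in>(\<Union>c\<in>S. {t\<in>X. (x, t) \<in> c}). h t)" by simp
  also have "\<dots> = (\<Sum>c\<in>S. \<Sum>t\<in>{t\<in>X. (x, t) \<in> c}. h t)"
    by (rule sum.UNION_disjoint) (use finS finX disj in auto)
  finally show ?thesis .
qed

definition Inv :: "('a \<Rightarrow> 'a \<Rightarrow> 'k::field) \<Rightarrow> bool" where
  "Inv C \<longleftrightarrow> (\<forall>u\<in>S. \<forall>c\<in>S. \<forall>z z'. (x, z) \<in> c \<longrightarrow> (x, z') \<in> c \<longrightarrow> rs X x u C z = rs X x u C z')"

lemma rs_mult: "rs X x u (mmult X A B) z = (\<Sum>t\<in>X. rs X x u A t * B t z)"
  unfolding rs_def mmult_def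
  by (subst sum.swap) (simp add: sum_distrib_right)

lemma InvD: "Inv C \<Longrightarrow> u \<in> S \<Longrightarrow> c \<in> S \<Longrightarrow> (x, z) \<in> c \<Longrightarrow> (x, z') \<in> c \<Longrightarrow> rs X x u C z = rs X x u C z'"
  unfolding Inv_def by blast

lemma inv_mult:
  assumes IA: "Inv A" and IB: "Inv B"
  shows "Inv (mmult X A B)"
  unfolding Inv_def
proof (intro ballI allI impI)
  fix u c z z' assume uS: "u \<in> S" and cS: "c \<in> S" and zc: "(x, z) \<in> c" and zc': "(x, z') \<in> c"
  define rep where "rep d = (SOME t. (x, t) \<in> d)" for d :: "('a \<times> 'a) set"
  have eq: "rs X x u (mmult X A B) y = (\<Sum>d\<in>S. rs X x u A (rep d) * rs X x d B y)" for y
  proof -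
    have "rs X x u (mmult X A B) y = (\<Sum>t\<in>X. rs X x u A t * B t y)"
      by (rule rs_mult)
    also have "\<dots> = (\<Sum>d\<in>S. \<Sum>t\<in>{t\<in>X. (x, t) \<in> d}. rs X x u A t * B t y)"
      by (rule partition_sum)
    also have "\<dots> = (\<Sum>d\<in>S. \<Sum>t\<in>{t\<in>X. (x, t) \<in> d}. rs X x u A (rep d) * B t y)"
    proof (rule sum.cong[OF refl], rule sum.cong[OF refl])
      fix d t assume dS: "d \<in> S" and t: "t \<in> {t\<in>X. (x, t) \<in> d}"
      then have td: "(x, t) \<in> d" by simp
      then have "(x, rep d) \<in> d" unfolding rep_def by (rule someI)
      then have "rs X x u A t = rs X x u A (rep d)" by (rule InvD[OF IA uS dS td])
      then show "rs X x u A t * B t y = rs X x u A (rep d) * B t y" by simp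
    qed
    also have "\<dots> = (\<Sum>d\<in>S. rs X x u A (rep d) * rs X x d B y)"
      unfolding rs_def by (simp only: sum_distrib_left)
    finally show ?thesis .
  qed
  have "rs X x d B z = rs X x d B z'" if "d \<in> S" for d by (rule InvD[OF IB that cS zc zc'])
  then show "rs X x u (mmult X A B) z = rs X x u (mmult X A B) z'"
    unfolding eq by (intro sum.cong refl) simp
qed

lemma sum_ind: "finite W \<Longrightarrow> (\<Sum>w\<in>W. if P w then (1::'k::field) else 0) = of_nat (card {w\<in>W. P w})"
  by (simp add: sum.If_cases Collect_conj_eq Int_commute)

lemma rs_gen:
  assumes uS: "u \<in> S" and zX: "z \<in> X"
  shows "rs X x u (mmult X (mmult X (dual_idem x a) (adj_mat b)) (dual_idem x c) :: 'a \<Rightarrow> 'a \<Rightarrow> 'k::field) z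
     = (if (x, z) \<in> c then of_nat (card {w. (x, w) \<in> u \<and> (x, w) \<in> a \<and> (w, z) \<in> b}) else 0)"
proof -
  have "rs X x u (mmult X (mmult X (dual_idem x a) (adj_mat b)) (dual_idem x c) :: 'a \<Rightarrow> 'a \<Rightarrow> 'k) z
     = (\<Sum>w\<in>{w\<in>X. (x, w) \<in> u}. if (x, z) \<in> c \<and> ((x, w) \<in> a \<and> (w, z) \<in> b) then 1 else 0)"
    unfolding rs_def using zX by (intro sum.cong refl) (auto simp: mmult_dual_left mmult_dual_right finX adj_mat_def)
  also have "\<dots> = of_nat (card {w\<in>{w\<in>X. (x, w) \<in> u}. (x, z) \<in> c \<and> ((x, w) \<in> a \<and> (w, z) \<in> b)})"
    by (rule sum_ind) (simp add: finX)
  also have "\<dots> = (if (x, z) \<in> c then of_nat (card {w. (x, w) \<in> u \<and> (x, w) \<in> a \<and> (w, z) \<in> b}) else 0)"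
  proof -
    have "{w\<in>{w\<in>X. (x, w) \<in> u}. (x, z) \<in> c \<and> ((x, w) \<in> a \<and> (w, z) \<in> b)} =
      (if (x, z) \<in> c then {w. (x, w) \<in> u \<and> (x, w) \<in> a \<and> (w, z) \<in> b} else {})"
      using Ssub[OF uS] by auto
    then show ?thesis by simp
  qed
  finally show ?thesis .
qed

lemma inv_gen:
  assumes aS: "a \<in> S" and bS: "b \<in> S" and cS: "c \<in> S"
  shows "Inv (mmult X (mmult X (dual_idem x a) (adj_mat b)) (dual_idem x c) :: 'a \<Rightarrow> 'a \<Rightarrow> 'k::field)"
  unfolding Inv_def
proof (intro ballI allI impI)
  fix u c' z z' assume uS: "u \<in> S" and c'S: "c' \<in> S" and zc: "(x, z) \<in> c'" and zc': "(x, z') \<in> c'"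
  have zX: "z \<in> X" "z' \<in> X" using Ssub[OF c'S] zc zc' by auto
  show "rs X x u (mmult X (mmult X (dual_idem x a) (adj_mat b)) (dual_idem x c) :: 'a \<Rightarrow> 'a \<Rightarrow> 'k) z =
        rs X x u (mmult X (mmult X (dual_idem x a) (adj_mat b)) (dual_idem x c)) z'"
  proof (cases "c' = c")
    case False
    then have "(x, z) \<notin> c" "(x, z') \<notin> c" using disj'[OF c'S cS] zc zc' by auto
    then show ?thesis by (simp add: rs_gen[OF uS zX(1)] rs_gen[OF uS zX(2)])
  next
    case True
    have "card {w. (x, w) \<in> u \<and> (x, w) \<in> a \<and> (w, z) \<in> b} = card {w. (x, w) \<in> u \<and> (x, w) \<in> a \<and> (w, z') \<in> b}"
    proof (cases "u = a")
      case True
      then show ?thesis using reg[OF aS bS cS, of x z x z'] zc zc' \<open>c' = c\<close> by simp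
    next
      case False
      then have e: "{w. (x, w) \<in> u \<and> (x, w) \<in> a \<and> (w, y) \<in> b} = {}" for y using disj[OF uS aS] by auto
      show ?thesis by (simp only: e)
    qed
    then show ?thesis using True zc zc' by (simp add: rs_gen[OF uS zX(1)] rs_gen[OF uS zX(2)])
  qed
qed

lemma inv_one: "Inv (mone X :: 'a \<Rightarrow> 'a \<Rightarrow> 'k::field)"
  unfolding Inv_def
proof (intro ballI allI impI)
  fix u c z z' assume uS: "u \<in> S" and cS: "c \<in> S" and zc: "(x, z) \<in> c" and zc': "(x, z') \<in> c"
  have rs1: "rs X x u (mone X :: 'a \<Rightarrow> 'a \<Rightarrow> 'k) y = (if y \<in> X \<and> (x, y) \<in> u then 1 else 0)" for y
    unfolding rs_def mone_def by (subst sum_point[where a=y]) (auto simp: finX)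
  have "z \<in> X" "z' \<in> X" using Ssub[OF cS] zc zc' by auto
  moreover have "(x, z) \<in> u \<longleftrightarrow> (x, z') \<in> u" using disj'[OF uS cS] zc zc' by blast
  ultimately show "rs X x u (mone X :: 'a \<Rightarrow> 'a \<Rightarrow> 'k) z = rs X x u (mone X) z'" by (simp add: rs1)
qed

lemma inv_T: "C \<in> terwilliger X S x \<Longrightarrow> Inv C"
proof (induction rule: terwilliger.induct)
  case (gen s t u) then show ?case by (rule inv_gen)
next
  case one then show ?case by (rule inv_one)
next
  case (add A B)
  have r: "rs X x u (\<lambda>y z. A y z + B y z) z = rs X x u A z + rs X x u B z" for u z
    unfolding rs_def by (rule sum.distrib)
  show ?case unfolding Inv_def r using InvD[OF add.IH(1)] InvD[OF add.IH(2)] by metis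
next
  case (smult A c)
  have r: "rs X x u (\<lambda>y z. c * A y z) z = c * rs X x u A z" for u z
    unfolding rs_def by (rule sum_distrib_left[symmetric])
  show ?case unfolding Inv_def r using InvD[OF smult.IH] by metis
next
  case (mult A B) then show ?case using inv_mult by blast
qed


lemma valency_eq: assumes sS: "s \<in> S" shows "valency X s = card {w. (x, w) \<in> s}"
proof -
  obtain a b where ab: "(SOME p. p \<in> Id_on X) = (a, b)" by (cases "SOME p. p \<in> Id_on X") auto
  have "(SOME p. p \<in> Id_on X) \<in> Id_on X" using xX by (metis Id_onI someI)
  then have abI: "(a, b) \<in> Id_on X" using ab by simp
  have "valency X s = card {z. (a, z) \<in> s \<and> (z, b) \<in> converse s}"
    unfolding valency_def int_number_def ab by simp
  also have "\<dots> = card {z. (x, z) \<in> s \<and> (z, x) \<in> converse s}"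
    by (rule reg[OF sS convS[OF sS] IdS abI]) (use xX in auto)
  finally show ?thesis by simp
qed

lemma rs_Id: "rs X x (Id_on X) C w = C x w"
proof -
  have "{w'\<in>X. (x, w') \<in> Id_on X} = {x}" using xX by auto
  then show ?thesis unfolding rs_def by simp
qed

lemma key:
  assumes CT: "C \<in> terwilliger X S x" and sS: "s \<in> S"
    and ch: "CHAR('k) dvd valency X s"
  shows "(\<Sum>w\<in>X. C x w * (if (x, w) \<in> s then 1 else 0)) = (0 :: 'k::field)"
proof -
  have I: "Inv C" using inv_T[OF CT] .
  have "(\<Sum>w\<in>X. C x w * (if (x, w) \<in> s then 1 else 0)) = (\<Sum>w\<in>X. if (x, w) \<in> s then C x w else 0)"
    by (intro sum.cong) auto
  also have "\<dots> = (\<Sum>w\<in>{w\<in>X. (x, w) \<in> s}. C x w)"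
    by (simp add: sum.inter_filter finX)
  also have "\<dots> = 0"
  proof (cases "{w\<in>X. (x, w) \<in> s} = {}")
    case True then show ?thesis by (simp only: True sum.empty)
  next
    case False
    then obtain w0 where w0: "w0 \<in> X" "(x, w0) \<in> s" by auto
    have "(\<Sum>w\<in>{w\<in>X. (x, w) \<in> s}. C x w) = (\<Sum>w\<in>{w\<in>X. (x, w) \<in> s}. C x w0)"
    proof (rule sum.cong[OF refl])
      fix w assume "w \<in> {w\<in>X. (x, w) \<in> s}"
      then have "rs X x (Id_on X) C w = rs X x (Id_on X) C w0"
        using I IdS sS w0 unfolding Inv_def by blast
      then show "C x w = C x w0" by (simp add: rs_Id)
    qed
    also have "\<dots> = of_nat (card {w\<in>X. (x, w) \<in> s}) * C x w0" by simp
    also have "(of_nat (card {w\<in>X. (x, w) \<in> s}) :: 'k) = 0"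
    proof -
      have "{w\<in>X. (x, w) \<in> s} = {w. (x, w) \<in> s}" using Ssub[OF sS] by auto
      then show ?thesis using ch by (simp add: valency_eq[OF sS] of_nat_eq_0_iff_char_dvd)
    qed
    finally show ?thesis by simp
  qed
  finally show ?thesis .
qed

lemma zero_T: "(\<lambda>y z. 0) \<in> (terwilliger X S x :: ('a \<Rightarrow> 'a \<Rightarrow> 'k::field) set)"
proof -
  have "(\<lambda>y z. (0::'k) * mone X y z) \<in> terwilliger X S x" by (rule terwilliger.smult[OF terwilliger.one])
  then show ?thesis by simp
qed

lemma sum_T: "finite F \<Longrightarrow> (\<forall>i\<in>F. f i \<in> terwilliger X S x) \<Longrightarrow>
  (\<lambda>y z. \<Sum>i\<in>F. c i * f i y z) \<in> (terwilliger X S x :: ('a \<Rightarrow> 'a \<Rightarrow> 'k::field) set)"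
proof (induction F rule: finite_induct)
  case empty then show ?case using zero_T by simp
next
  case (insert i F)
  then have "(\<lambda>y z. c i * f i y z + (\<Sum>i\<in>F. c i * f i y z)) \<in> (terwilliger X S x :: ('a \<Rightarrow> 'a \<Rightarrow> 'k::field) set)"
    by (intro terwilliger.add terwilliger.smult) auto
  then show ?case using insert by simp
qed

definition vv :: "('a \<times> 'a) set \<Rightarrow> 'a \<Rightarrow> 'k::field" where
  "vv s w = (if (x, w) \<in> s then 1 else 0)"

definition Iset :: "('a \<times> 'a) set \<Rightarrow> ('a \<Rightarrow> 'a \<Rightarrow> 'k::field) set" where
  "Iset s = {M \<in> terwilliger X S x.
     (\<forall>z\<in>X. \<exists>A\<in>terwilliger X S x. \<forall>y\<in>X. M y z = (\<Sum>t\<in>X. A y t * vv s t)) \<and>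
     (\<forall>y\<in>X. \<exists>B\<in>terwilliger X S x. \<forall>z\<in>X. M y z = B x z)}"

lemma I_T: "M \<in> Iset s \<Longrightarrow> M \<in> terwilliger X S x"
  unfolding Iset_def by simp

lemma I_col: "M \<in> Iset s \<Longrightarrow> z \<in> X \<Longrightarrow> \<exists>A. A \<in> terwilliger X S x \<and> (\<forall>y\<in>X. M y z = (\<Sum>t\<in>X. A y t * vv s t))"
  unfolding Iset_def by blast

lemma I_row: "M \<in> Iset s \<Longrightarrow> y \<in> X \<Longrightarrow> \<exists>B. B \<in> terwilliger X S x \<and> (\<forall>z\<in>X. M y z = B x z)"
  unfolding Iset_def by blast

lemma I_intro: "M \<in> terwilliger X S x \<Longrightarrow>
   (\<And>z. z \<in> X \<Longrightarrow> \<exists>A\<in>terwilliger X S x. \<forall>y\<in>X. M y z = (\<Sum>t\<in>X. A y t * vv s t)) \<Longrightarrow>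
   (\<And>y. y \<in> X \<Longrightarrow> \<exists>B\<in>terwilliger X S x. \<forall>z\<in>X. M y z = B x z) \<Longrightarrow> M \<in> Iset s"
  unfolding Iset_def by blast

lemma I_zero: "(\<lambda>y z. 0) \<in> Iset s"
  unfolding Iset_def by (intro CollectI conjI ballI zero_T bexI[OF _ zero_T]) auto

lemma I_add: assumes "M \<in> Iset s" "M' \<in> Iset s" shows "(\<lambda>y z. M y z + M' y z) \<in> Iset s"
  unfolding Iset_def
proof (intro CollectI conjI ballI)
  show "(\<lambda>y z. M y z + M' y z) \<in> terwilliger X S x" using assms unfolding Iset_def by (auto intro: terwilliger.add)
next
  fix z assume z: "z \<in> X"
  obtain A where A: "A \<in> terwilliger X S x" "\<forall>y\<in>X. M y z = (\<Sum>t\<in>X. A y t * vv s t)" using assms(1) z unfolding Iset_def by blast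
  obtain A' where A': "A' \<in> terwilliger X S x" "\<forall>y\<in>X. M' y z = (\<Sum>t\<in>X. A' y t * vv s t)" using assms(2) z unfolding Iset_def by blast
  show "\<exists>A\<in>terwilliger X S x. \<forall>y\<in>X. M y z + M' y z = (\<Sum>t\<in>X. A y t * vv s t)"
    by (rule bexI[of _ "\<lambda>y z. A y z + A' y z"]) (use A A' in \<open>auto simp: sum.distrib distrib_right intro: terwilliger.add\<close>)
next
  fix y assume y: "y \<in> X"
  obtain B where B: "B \<in> terwilliger X S x" "\<forall>z\<in>X. M y z = B x z" using assms(1) y unfolding Iset_def by blast
  obtain B' where B': "B' \<in> terwilliger X S x" "\<forall>z\<in>X. M' y z = B' x z" using assms(2) y unfolding Iset_def by blast
  show "\<exists>B\<in>terwilliger X S x. \<forall>z\<in>X. M y z + M' y z = B x z"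
    by (rule bexI[of _ "\<lambda>y z. B y z + B' y z"]) (use B B' in \<open>auto intro: terwilliger.add\<close>)
qed

lemma I_smult: assumes "M \<in> Iset s" shows "(\<lambda>y z. c * M y z) \<in> Iset s"
  unfolding Iset_def
proof (intro CollectI conjI ballI)
  show "(\<lambda>y z. c * M y z) \<in> terwilliger X S x" using assms unfolding Iset_def by (auto intro: terwilliger.smult)
next
  fix z assume z: "z \<in> X"
  obtain A where A: "A \<in> terwilliger X S x" "\<forall>y\<in>X. M y z = (\<Sum>t\<in>X. A y t * vv s t)" using assms(1) z unfolding Iset_def by blast
  show "\<exists>A\<in>terwilliger X S x. \<forall>y\<in>X. c * M y z = (\<Sum>t\<in>X. A y t * vv s t)"
    by (rule bexI[of _ "\<lambda>y z. c * A y z"]) (use A in \<open>auto simp: sum_distrib_left mult.assoc intro: terwilliger.smult\<close>)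
next
  fix y assume y: "y \<in> X"
  obtain B where B: "B \<in> terwilliger X S x" "\<forall>z\<in>X. M y z = B x z" using assms(1) y unfolding Iset_def by blast
  show "\<exists>B\<in>terwilliger X S x. \<forall>z\<in>X. c * M y z = B x z"
    by (rule bexI[of _ "\<lambda>y z. c * B y z"]) (use B in \<open>auto intro: terwilliger.smult\<close>)
qed

lemma I_lmult: assumes M: "M \<in> Iset s" and N: "N \<in> terwilliger X S x" shows "mmult X N M \<in> Iset s"
proof (rule I_intro)
  show "mmult X N M \<in> terwilliger X S x" by (rule terwilliger.mult[OF N I_T[OF M]])
next
  fix z assume z: "z \<in> X"
  obtain A where A: "A \<in> terwilliger X S x" "\<forall>y\<in>X. M y z = (\<Sum>t\<in>X. A y t * vv s t)" using I_col[OF M z] by blast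
  show "\<exists>A\<in>terwilliger X S x. \<forall>y\<in>X. mmult X N M y z = (\<Sum>t\<in>X. A y t * vv s t)"
  proof (rule bexI[of _ "mmult X N A"], intro ballI)
    fix y assume y: "y \<in> X"
    have "mmult X N M y z = (\<Sum>w\<in>X. N y w * (\<Sum>t\<in>X. A w t * vv s t))"
      unfolding mmult_def using A(2) by (intro sum.cong refl) simp
    also have "\<dots> = (\<Sum>t\<in>X. mmult X N A y t * vv s t)"
      unfolding mmult_def by (rule swap1)
    finally show "mmult X N M y z = (\<Sum>t\<in>X. mmult X N A y t * vv s t)" .
  next
    show "mmult X N A \<in> terwilliger X S x" by (rule terwilliger.mult[OF N A(1)])
  qed
next
  fix y assume y: "y \<in> X"
  have "\<forall>w\<in>X. \<exists>B. B \<in> terwilliger X S x \<and> (\<forall>z\<in>X. M w z = B x z)" by (intro ballI I_row[OF M])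
  from bchoice[OF this] obtain Bf where Bf: "\<forall>w\<in>X. Bf w \<in> terwilliger X S x \<and> (\<forall>z\<in>X. M w z = Bf w x z)" by auto
  show "\<exists>B\<in>terwilliger X S x. \<forall>z\<in>X. mmult X N M y z = B x z"
  proof (rule bexI[of _ "\<lambda>a b. \<Sum>w\<in>X. N y w * Bf w a b"], intro ballI)
    fix z assume z: "z \<in> X"
    show "mmult X N M y z = (\<Sum>w\<in>X. N y w * Bf w x z)"
      unfolding mmult_def using Bf z by (intro sum.cong refl) simp
  next
    show "(\<lambda>a b. \<Sum>w\<in>X. N y w * Bf w a b) \<in> terwilliger X S x"
      by (rule sum_T) (use finX Bf in simp_all)
  qed
qed

lemma I_rmult: assumes M: "M \<in> Iset s" and N: "N \<in> terwilliger X S x" shows "mmult X M N \<in> Iset s"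
proof (rule I_intro)
  show "mmult X M N \<in> terwilliger X S x" by (rule terwilliger.mult[OF I_T[OF M] N])
next
  fix z assume z: "z \<in> X"
  have "\<forall>w\<in>X. \<exists>A. A \<in> terwilliger X S x \<and> (\<forall>y\<in>X. M y w = (\<Sum>t\<in>X. A y t * vv s t))" by (intro ballI I_col[OF M])
  from bchoice[OF this] obtain Af where Af: "\<forall>w\<in>X. Af w \<in> terwilliger X S x \<and> (\<forall>y\<in>X. M y w = (\<Sum>t\<in>X. Af w y t * vv s t))" by auto
  show "\<exists>A\<in>terwilliger X S x. \<forall>y\<in>X. mmult X M N y z = (\<Sum>t\<in>X. A y t * vv s t)"
  proof (rule bexI[of _ "\<lambda>a b. \<Sum>w\<in>X. N w z * Af w a b"], intro ballI)
    fix y assume y: "y \<in> X"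
    have "mmult X M N y z = (\<Sum>w\<in>X. (\<Sum>t\<in>X. Af w y t * vv s t) * N w z)"
      unfolding mmult_def using Af y by (intro sum.cong refl) simp
    also have "\<dots> = (\<Sum>t\<in>X. (\<Sum>w\<in>X. N w z * Af w y t) * vv s t)"
      by (rule swap2)
    finally show "mmult X M N y z = (\<Sum>t\<in>X. (\<Sum>w\<in>X. N w z * Af w y t) * vv s t)" .
  next
    show "(\<lambda>a b. \<Sum>w\<in>X. N w z * Af w a b) \<in> terwilliger X S x"
      by (rule sum_T) (use finX Af in simp_all)
  qed
next
  fix y assume y: "y \<in> X"
  obtain B where B: "B \<in> terwilliger X S x" "\<forall>z\<in>X. M y z = B x z" using I_row[OF M y] by blast
  show "\<exists>B\<in>terwilliger X S x. \<forall>z\<in>X. mmult X M N y z = B x z"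
  proof (rule bexI[of _ "mmult X B N"], intro ballI)
    fix z assume z: "z \<in> X"
    show "mmult X M N y z = mmult X B N x z"
      unfolding mmult_def using B(2) by (intro sum.cong refl) simp
  next
    show "mmult X B N \<in> terwilliger X S x" by (rule terwilliger.mult[OF B(1) N])
  qed
qed

lemma I_prod:
  assumes sS: "s \<in> S" and ch: "CHAR('k) dvd valency X s"
    and M1: "M1 \<in> (Iset s :: ('a \<Rightarrow> 'a \<Rightarrow> 'k::field) set)" and M2: "M2 \<in> Iset s" and y: "y \<in> X" and z: "z \<in> X"
  shows "mmult X M1 M2 y z = 0"
proof -
  obtain B where B: "B \<in> terwilliger X S x" "\<forall>w\<in>X. M1 y w = B x w" using I_row[OF M1 y] by blast
  obtain A where A: "A \<in> terwilliger X S x" "\<forall>w\<in>X. M2 w z = (\<Sum>t\<in>X. A w t * vv s t)" using I_col[OF M2 z] by blast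
  have "mmult X M1 M2 y z = (\<Sum>w\<in>X. B x w * (\<Sum>t\<in>X. A w t * vv s t))"
    unfolding mmult_def using A B by (intro sum.cong) auto
  also have "\<dots> = (\<Sum>t\<in>X. mmult X B A x t * vv s t)"
    unfolding mmult_def by (rule swap1)
  also have "\<dots> = 0"
    using key[OF terwilliger.mult[OF B(1) A(1)] sS ch] unfolding vv_def .
  finally show ?thesis .
qed

definition aa :: "('a \<times> 'a) set \<Rightarrow> 'a \<Rightarrow> 'a \<Rightarrow> 'k::field" where
  "aa s = mmult X (mmult X (dual_idem x s) (adj_mat (converse s))) (dual_idem x (Id_on X))"

lemma aa_val: assumes sS: "s \<in> S" shows "aa s y z = (if z = x \<and> (x, y) \<in> s then 1 else 0)"
  unfolding aa_def using Ssub[OF sS] xX by (auto simp: mmult_dual_left mmult_dual_right finX adj_mat_def)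

lemma aa_I: assumes sS: "s \<in> S" shows "aa s \<in> Iset s"
  unfolding Iset_def
proof (intro CollectI conjI ballI)
  show "aa s \<in> terwilliger X S x" unfolding aa_def using sS convS[OF sS] IdS by (rule terwilliger.gen)
next
  fix z assume z: "z \<in> X"
  show "\<exists>A\<in>terwilliger X S x. \<forall>y\<in>X. aa s y z = (\<Sum>t\<in>X. A y t * vv s t)"
  proof (rule bexI[of _ "\<lambda>a b. (if z = x then 1 else 0) * mone X a b"], intro ballI)
    fix y assume y: "y \<in> X"
    show "aa s y z = (\<Sum>t\<in>X. (if z = x then 1 else 0) * mone X y t * vv s t)"
      by (subst sum_point[where a=y]) (use y finX in \<open>auto simp: aa_val[OF sS] mone_def vv_def\<close>)
  qed (rule terwilliger.smult[OF terwilliger.one])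
next
  fix y assume y: "y \<in> X"
  show "\<exists>B\<in>terwilliger X S x. \<forall>z\<in>X. aa s y z = B x z"
  proof (rule bexI[of _ "\<lambda>a b. (if (x, y) \<in> s then 1 else 0) * mone X a b"])
    show "\<forall>z\<in>X. aa s y z = (if (x, y) \<in> s then 1 else 0) * mone X x z"
      using xX by (auto simp: aa_val[OF sS] mone_def)
  qed (rule terwilliger.smult[OF terwilliger.one])
qed

lemma aa_nonzero: assumes sS: "s \<in> S" shows "\<exists>y\<in>X. \<exists>z\<in>X. (aa s :: 'a \<Rightarrow> 'a \<Rightarrow> 'k::field) y z \<noteq> 0"
proof -
  obtain p q where pq: "(p, q) \<in> s" using nonempty[OF sS] by auto
  have pX: "p \<in> X" using Ssub[OF sS] pq by auto
  have c: "card {w. (p, w) \<in> s \<and> (w, p) \<in> converse s} = card {w. (x, w) \<in> s \<and> (w, x) \<in> converse s}"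
    by (rule reg[OF sS convS[OF sS] IdS]) (use pX xX in auto)
  have sub: "{w. (p, w) \<in> s} \<subseteq> X" using Ssub[OF sS] by auto
  have fin: "finite {w. (p, w) \<in> s}" by (rule finite_subset[OF sub finX])
  have ne: "{w. (p, w) \<in> s} \<noteq> {}" using pq by auto
  have "card {w. (p, w) \<in> s} \<noteq> 0" using fin ne by simp
  then have "card {w. (x, w) \<in> s} \<noteq> 0" using c by simp
  then have "{w. (x, w) \<in> s} \<noteq> {}" by (intro notI) simp
  then obtain w where w: "(x, w) \<in> s" by blast
  then have "w \<in> X" using Ssub[OF sS] by auto
  then show ?thesis using w xX by (intro bexI[of _ w] bexI[of _ x]) (auto simp: aa_val[OF sS])
qed

lemma main:
  assumes sS: "s \<in> S" and ch: "CHAR('k) dvd valency X s"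
  shows "\<not> mat_semisimple X (terwilliger X S x :: ('a \<Rightarrow> 'a \<Rightarrow> 'k::field) set)"
proof -
  have "mat_ideal X (terwilliger X S x) (Iset s :: ('a \<Rightarrow> 'a \<Rightarrow> 'k) set)"
    unfolding mat_ideal_def
  proof (intro conjI ballI allI)
    show "Iset s \<subseteq> terwilliger X S x" using I_T by blast
    show "(\<lambda>y z. 0) \<in> (Iset s :: ('a \<Rightarrow> 'a \<Rightarrow> 'k) set)" by (rule I_zero)
    fix a b :: "'a \<Rightarrow> 'a \<Rightarrow> 'k" assume "a \<in> Iset s" "b \<in> Iset s"
    then show "(\<lambda>y z. a y z + b y z) \<in> Iset s" by (rule I_add)
  next
    fix a :: "'a \<Rightarrow> 'a \<Rightarrow> 'k" and c assume "a \<in> Iset s"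
    then show "(\<lambda>y z. c * a y z) \<in> Iset s" by (rule I_smult)
  next
    fix a b :: "'a \<Rightarrow> 'a \<Rightarrow> 'k" assume "a \<in> terwilliger X S x" "b \<in> Iset s"
    then show "mmult X a b \<in> Iset s" "mmult X b a \<in> Iset s" by (simp_all add: I_lmult I_rmult)
  qed
  moreover have "mat_nilpotent X (Iset s :: ('a \<Rightarrow> 'a \<Rightarrow> 'k) set)"
    unfolding mat_nilpotent_def
  proof (intro exI[of _ 2] conjI allI impI ballI)
    fix as :: "('a \<Rightarrow> 'a \<Rightarrow> 'k) list" and y z
    assume h: "length as = 2 \<and> set as \<subseteq> Iset s" and y: "y \<in> X" and z: "z \<in> X"
    then obtain M1 M2 where as: "as = [M1, M2]"
      by (metis (no_types, lifting) One_nat_def Suc_1 length_0_conv length_Suc_conv)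
    have M: "M1 \<in> Iset s" "M2 \<in> Iset s" using h as by auto
    have "foldr (mmult X) as (mone X) y z = mmult X M1 (mmult X M2 (mone X)) y z" using as by simp
    also have "\<dots> = mmult X M1 M2 y z"
      unfolding mmult_def[of X M1] using z by (simp add: mmult_mone_right finX)
    also have "\<dots> = 0" by (rule I_prod[OF sS ch M y z])
    finally show "foldr (mmult X) as (mone X) y z = 0" .
  qed simp
  moreover have "\<exists>a\<in>Iset s. \<exists>y\<in>X. \<exists>z\<in>X. (a :: 'a \<Rightarrow> 'a \<Rightarrow> 'k) y z \<noteq> 0"
    using aa_I[OF sS] aa_nonzero[OF sS] by blast
  ultimately show ?thesis unfolding mat_semisimple_def by blast
qed
end

theorem theorem3p4:
  fixes X :: "'a set" and S :: "('a \<times> 'a) set set" and x :: 'a and p :: nat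
    and K :: "'k::field itself"
  assumes "assoc_scheme X S"
    and "x \<in> X"
    and "CHAR('k) = p" and "p > 0"
    and "\<exists>s\<in>S. p dvd valency X s"
  shows "\<not> mat_semisimple X (terwilliger X S x :: ('a \<Rightarrow> 'a \<Rightarrow> 'k) set)"
proof -
  obtain s where sS: "s \<in> S" and d: "p dvd valency X s" using assms(5) by blast
  have "CHAR('k) dvd valency X s" using d assms(3) by simp
  then show ?thesis by (rule main[OF assms(1,2) sS])
qed

end
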